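(* Let $X$ be a topological space. Then $X$ is core-compact if and only if its symmetric pseudogroup $\mathscr{I}(X)$ is continuous.
   Context: The symmetric pseudogroup $\mathscr{I}(X)$ is the set of all homeomorphisms $f:U\to V$ between open subsets $U=\mathrm{dom}(f)$ and $V$ of $X$, with product: for $f:U\to V$ and $f_1:U_1\to V_1$, $f_1\cdot f : x\mapsto f_1(f(x))$ defined on $f^{-1}(V\cap U_1)$ with values in $f_1(V\cap U_1)$; it is an inverse semigroup with $f^*=f^{-1}$. Its intrinsic order is $f\leqslant g$ iff $f=g|_U$ for some open $U\subseteq\mathrm{dom}(g)$. In a poset, $x$ is way-below $y$ ($x\ll y$) if for every directed subset $D$ (nonempty, any two elements having an upper bound in $D$) that has a supremum with $y\leqslant\sup D$, there is $d\in D$ with $x\leqslant d$. A poset is continuous if for every $s$ the set $\{t: t\ll s\}$ is directed with supremum $s$; $\mathscr{I}(X)$ is continuous if it is so for its intrinsic order. $X$ is core-compact if the collection of closed subsets of $X$, ordered by reverse inclusion $\supseteq$, is a continuous poset. *)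

theory Defs
  imports "HOL-Analysis.Analysis"
begin

definition directed_in :: "'b set \<Rightarrow> ('b \<Rightarrow> 'b \<Rightarrow> bool) \<Rightarrow> 'b set \<Rightarrow> bool" where
  "directed_in A le D \<longleftrightarrow> D \<subseteq> A \<and> D \<noteq> {} \<and>
     (\<forall>x\<in>D. \<forall>y\<in>D. \<exists>z\<in>D. le x z \<and> le y z)"

definition is_sup_in :: "'b set \<Rightarrow> ('b \<Rightarrow> 'b \<Rightarrow> bool) \<Rightarrow> 'b set \<Rightarrow> 'b \<Rightarrow> bool" where
  "is_sup_in A le D s \<longleftrightarrow> s \<in> A \<and> (\<forall>d\<in>D. le d s) \<and>
     (\<forall>u\<in>A. (\<forall>d\<in>D. le d u) \<longrightarrow> le s u)"

definition way_below :: "'b set \<Rightarrow> ('b \<Rightarrow> 'b \<Rightarrow> bool) \<Rightarrow> 'b \<Rightarrow> 'b \<Rightarrow> bool" where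
  "way_below A le x y \<longleftrightarrow>
     (\<forall>D. directed_in A le D \<longrightarrow> (\<forall>s. is_sup_in A le D s \<longrightarrow> le y s \<longrightarrow> (\<exists>d\<in>D. le x d)))"

definition continuous_poset :: "'b set \<Rightarrow> ('b \<Rightarrow> 'b \<Rightarrow> bool) \<Rightarrow> bool" where
  "continuous_poset A le \<longleftrightarrow>
     (\<forall>s\<in>A. directed_in A le {t\<in>A. way_below A le t s} \<and>
             is_sup_in A le {t\<in>A. way_below A le t s} s)"

definition core_compact :: "'a topology \<Rightarrow> bool" where
  "core_compact X \<longleftrightarrow> continuous_poset {C. closedin X C} (\<lambda>C D. D \<subseteq> C)"

text \<open>A partial homeomorphism f : U -> V between open subsets is represented as a
  partial map with domain U = dom f and image V = ran f.\<close>
definition sym_pseudogroup :: "'a topology \<Rightarrow> ('a \<rightharpoonup> 'a) set" where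
  "sym_pseudogroup X = {f. openin X (dom f) \<and> openin X (ran f) \<and>
      homeomorphic_map (subtopology X (dom f)) (subtopology X (ran f)) (\<lambda>x. the (f x))}"

definition pg_mult :: "('a \<rightharpoonup> 'a) \<Rightarrow> ('a \<rightharpoonup> 'a) \<Rightarrow> ('a \<rightharpoonup> 'a)" where
  "pg_mult f1 f = f1 \<circ>\<^sub>m f"

definition pg_le :: "'a topology \<Rightarrow> ('a \<rightharpoonup> 'a) \<Rightarrow> ('a \<rightharpoonup> 'a) \<Rightarrow> bool" where
  "pg_le X f g \<longleftrightarrow> (\<exists>U. openin X U \<and> U \<subseteq> dom g \<and> f = g |` U)"

end

theory Submission
  imports Defs
begin

definition wbO :: "'a topology \<Rightarrow> 'a set \<Rightarrow> 'a set \<Rightarrow> bool" where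
 "wbO X U V \<longleftrightarrow> openin X U \<and> (\<forall>\<U>. \<U> \<noteq> {} \<and> (\<forall>W\<in>\<U>. openin X W) \<and>
    (\<forall>A\<in>\<U>. \<forall>B\<in>\<U>. \<exists>C\<in>\<U>. A \<subseteq> C \<and> B \<subseteq> C) \<and> V \<subseteq> \<Union>\<U> \<longrightarrow> (\<exists>W\<in>\<U>. U \<subseteq> W))"

definition PQ :: "'a topology \<Rightarrow> 'a set \<Rightarrow> bool" where
 "PQ X V \<longleftrightarrow> (\<exists>U. wbO X U V) \<and>
   (\<forall>U1 U2. wbO X U1 V \<and> wbO X U2 V \<longrightarrow> (\<exists>U3. wbO X U3 V \<and> U1 \<subseteq> U3 \<and> U2 \<subseteq> U3)) \<and>
   V \<subseteq> \<Union>{U. wbO X U V}"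

lemma directed_inI:
  assumes "D \<subseteq> A" "D \<noteq> {}" "\<And>x y. x \<in> D \<Longrightarrow> y \<in> D \<Longrightarrow> \<exists>z\<in>D. le x z \<and> le y z"
  shows "directed_in A le D"
  using assms unfolding directed_in_def by blast

lemma is_sup_inI:
  assumes "s \<in> A" "\<And>d. d \<in> D \<Longrightarrow> le d s" "\<And>u. u \<in> A \<Longrightarrow> (\<And>d. d \<in> D \<Longrightarrow> le d u) \<Longrightarrow> le s u"
  shows "is_sup_in A le D s"
  using assms unfolding is_sup_in_def by blast

lemma way_belowD:
  assumes "way_below A le x y" "directed_in A le D" "is_sup_in A le D s" "le y s"
  shows "\<exists>d\<in>D. le x d"
  using assms unfolding way_below_def by blast

lemma way_belowI:
  assumes "\<And>D s. directed_in A le D \<Longrightarrow> is_sup_in A le D s \<Longrightarrow> le y s \<Longrightarrow> \<exists>d\<in>D. le x d"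
  shows "way_below A le x y"
  using assms unfolding way_below_def by blast

lemma wbOD:
  assumes "wbO X U V" "\<U> \<noteq> {}" "\<And>W. W \<in> \<U> \<Longrightarrow> openin X W"
    "\<And>A B. A \<in> \<U> \<Longrightarrow> B \<in> \<U> \<Longrightarrow> \<exists>C\<in>\<U>. A \<subseteq> C \<and> B \<subseteq> C" "V \<subseteq> \<Union>\<U>"
  shows "\<exists>W\<in>\<U>. U \<subseteq> W"
proof -
  have 1: "\<U> \<noteq> {} \<and> (\<forall>W\<in>\<U>. openin X W) \<and>
    (\<forall>A\<in>\<U>. \<forall>B\<in>\<U>. \<exists>C\<in>\<U>. A \<subseteq> C \<and> B \<subseteq> C) \<and> V \<subseteq> \<Union>\<U>"
    using assms(2-5) by (intro conjI ballI) auto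
  from assms(1) have "\<forall>\<U>. \<U> \<noteq> {} \<and> (\<forall>W\<in>\<U>. openin X W) \<and>
    (\<forall>A\<in>\<U>. \<forall>B\<in>\<U>. \<exists>C\<in>\<U>. A \<subseteq> C \<and> B \<subseteq> C) \<and> V \<subseteq> \<Union>\<U> \<longrightarrow> (\<exists>W\<in>\<U>. U \<subseteq> W)"
    unfolding wbO_def by (rule conjunct2)
  from spec[OF this, of \<U>] 1 show ?thesis by (rule mp)
qed

lemma wbOI:
  assumes "openin X U" "\<And>\<U>. \<U> \<noteq> {} \<Longrightarrow> (\<And>W. W \<in> \<U> \<Longrightarrow> openin X W) \<Longrightarrow>
    (\<And>A B. A \<in> \<U> \<Longrightarrow> B \<in> \<U> \<Longrightarrow> \<exists>C\<in>\<U>. A \<subseteq> C \<and> B \<subseteq> C) \<Longrightarrow> V \<subseteq> \<Union>\<U> \<Longrightarrow> \<exists>W\<in>\<U>. U \<subseteq> W"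
  shows "wbO X U V"
  unfolding wbO_def
  apply (intro conjI allI impI assms(1))
  apply (elim conjE)
  apply (rule assms(2))
     apply assumption
    apply blast
   apply blast
  apply assumption
  done

lemma wbO_open: "wbO X U V \<Longrightarrow> openin X U" unfolding wbO_def by blast

lemma wbO_sub: assumes "openin X V" "wbO X U V" shows "U \<subseteq> V"
proof -
  have "\<forall>\<U>. \<U> \<noteq> {} \<and> (\<forall>W\<in>\<U>. openin X W) \<and>
    (\<forall>A\<in>\<U>. \<forall>B\<in>\<U>. \<exists>C\<in>\<U>. A \<subseteq> C \<and> B \<subseteq> C) \<and> V \<subseteq> \<Union>\<U> \<longrightarrow> (\<exists>W\<in>\<U>. U \<subseteq> W)"
    using assms(2) unfolding wbO_def by blast
  from spec[OF this, of "{V}"] have "\<exists>W\<in>{V}. U \<subseteq> W" using assms(1) by simp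
  then show ?thesis by simp
qed

lemma wb_closed:
  assumes U: "openin X U" and V: "openin X V"
  shows "way_below {C. closedin X C} (\<lambda>C D. D \<subseteq> C) (topspace X - U) (topspace X - V) \<longleftrightarrow> wbO X U V"
proof
  assume wb: "way_below {C. closedin X C} (\<lambda>C D. D \<subseteq> C) (topspace X - U) (topspace X - V)"
  show "wbO X U V" unfolding wbO_def
  proof (intro conjI U allI impI)
    fix \<U> assume H: "\<U> \<noteq> {} \<and> (\<forall>W\<in>\<U>. openin X W) \<and>
    (\<forall>A\<in>\<U>. \<forall>B\<in>\<U>. \<exists>C\<in>\<U>. A \<subseteq> C \<and> B \<subseteq> C) \<and> V \<subseteq> \<Union>\<U>"
    from H have Hne: "\<U> \<noteq> {}" and Hop: "\<forall>W\<in>\<U>. openin X W"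
      and Hdir: "\<forall>A\<in>\<U>. \<forall>B\<in>\<U>. \<exists>C\<in>\<U>. A \<subseteq> C \<and> B \<subseteq> C" and Hcov: "V \<subseteq> \<Union>\<U>" by auto
    let ?D = "(\<lambda>W. topspace X - W) ` \<U>"
    have dir: "directed_in {C. closedin X C} (\<lambda>C D. D \<subseteq> C) ?D"
    proof (rule directed_inI)
      show "?D \<subseteq> {C. closedin X C}" using Hop by auto
      show "?D \<noteq> {}" using Hne by blast
      fix x y assume "x \<in> ?D" "y \<in> ?D"
      then obtain A B where AB: "A \<in> \<U>" "B \<in> \<U>" "x = topspace X - A" "y = topspace X - B" by blast
      then obtain C where C: "C \<in> \<U>" "A \<subseteq> C" "B \<subseteq> C" using Hdir by meson
      show "\<exists>z\<in>?D. z \<subseteq> x \<and> z \<subseteq> y"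
        by (rule bexI[of _ "topspace X - C"]) (use AB C in auto)
    qed
    have sup: "is_sup_in {C. closedin X C} (\<lambda>C D. D \<subseteq> C) ?D (topspace X - \<Union>\<U>)"
    proof (rule is_sup_inI)
      have "openin X (\<Union>\<U>)" using Hop by (intro openin_Union) auto
      then show "topspace X - \<Union>\<U> \<in> {C. closedin X C}" by auto
      show "topspace X - \<Union>\<U> \<subseteq> d" if "d \<in> ?D" for d
      proof -
        obtain W where "W \<in> \<U>" "d = topspace X - W" using \<open>d \<in> ?D\<close> by blast
        then show ?thesis by blast
      qed
      fix u assume "u \<in> {C. closedin X C}" "\<And>d. d\<in>?D \<Longrightarrow> u \<subseteq> d"
      then show "u \<subseteq> topspace X - \<Union>\<U>" using closedin_subset by blast
    qed
    have "topspace X - \<Union>\<U> \<subseteq> topspace X - V" using Hcov by blast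
    from way_belowD[OF wb dir sup this] obtain d where "d \<in> ?D" "d \<subseteq> topspace X - U"
      by blast
    then obtain W where "W \<in> \<U>" "topspace X - W \<subseteq> topspace X - U" by auto
    moreover have "U \<subseteq> topspace X" using U openin_subset by auto
    ultimately show "\<exists>W\<in>\<U>. U \<subseteq> W" by blast
  qed
next
  assume wb: "wbO X U V"
  show "way_below {C. closedin X C} (\<lambda>C D. D \<subseteq> C) (topspace X - U) (topspace X - V)"
  proof (rule way_belowI)
    fix D s assume dir: "directed_in {C. closedin X C} (\<lambda>C D. D \<subseteq> C) D"
      and sup: "is_sup_in {C. closedin X C} (\<lambda>C D. D \<subseteq> C) D s" and le: "s \<subseteq> topspace X - V"
    let ?U = "(\<lambda>C. topspace X - C) ` D"
    have Dne: "D \<noteq> {}" and Dc: "\<forall>C\<in>D. closedin X C" using dir unfolding directed_in_def by auto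
    have "closedin X (\<Inter>D)" using Dne Dc by (simp add: closedin_Inter)
    then have "\<Inter>D \<subseteq> s" using sup unfolding is_sup_in_def by auto
    then have cov: "V \<subseteq> \<Union>?U" using le V openin_subset by fastforce
    have "\<exists>W\<in>?U. U \<subseteq> W"
    proof (rule wbOD[OF wb])
      show "?U \<noteq> {}" using Dne by blast
      show "\<And>W. W \<in> ?U \<Longrightarrow> openin X W" using Dc by blast
      show "V \<subseteq> \<Union>?U" using cov by blast
      fix A B assume "A \<in> ?U" "B \<in> ?U"
      then obtain a b where ab: "a \<in> D" "b \<in> D" "A = topspace X - a" "B = topspace X - b" by blast
      then obtain c where c: "c \<in> D" "c \<subseteq> a" "c \<subseteq> b" using dir unfolding directed_in_def by meson
      show "\<exists>C\<in>?U. A \<subseteq> C \<and> B \<subseteq> C"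
        by (rule bexI[of _ "topspace X - c"]) (use ab c in auto)
    qed
    then obtain C where "C \<in> D" "U \<subseteq> topspace X - C" by auto
    moreover have "C \<subseteq> topspace X" using Dc \<open>C \<in> D\<close> closedin_subset by auto
    ultimately show "\<exists>d\<in>D. d \<subseteq> topspace X - U" by blast
  qed
qed

lemma WB_char:
  assumes V: "openin X V" and t: "closedin X t"
  shows "way_below {C. closedin X C} (\<lambda>C D. D \<subseteq> C) t (topspace X - V) \<longleftrightarrow> wbO X (topspace X - t) V"
proof -
  have "t = topspace X - (topspace X - t)" using closedin_subset[OF t] by blast
  moreover have "openin X (topspace X - t)" using t by blast
  ultimately show ?thesis using wb_closed[OF _ V, of "topspace X - t"] by metis
qed

lemma core_compact_iff: "core_compact X \<longleftrightarrow> (\<forall>V. openin X V \<longrightarrow> PQ X V)"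
proof
  assume cc: "core_compact X"
  show "\<forall>V. openin X V \<longrightarrow> PQ X V"
  proof (intro allI impI)
    fix V assume V: "openin X V"
    let ?Cl = "{C. closedin X C}" and ?le = "\<lambda>C D. D \<subseteq> (C::'a set)"
    let ?WB = "{t\<in>?Cl. way_below ?Cl ?le t (topspace X - V)}"
    have "topspace X - V \<in> ?Cl" using V by blast
    then have dir: "directed_in ?Cl ?le ?WB" and sup: "is_sup_in ?Cl ?le ?WB (topspace X - V)"
      using cc unfolding core_compact_def continuous_poset_def by blast+
    have mem: "t \<in> ?WB \<longleftrightarrow> closedin X t \<and> wbO X (topspace X - t) V" for t
      using WB_char[OF V, of t] by blast
    have memU: "topspace X - U \<in> ?WB" if "wbO X U V" for U
    proof -
      have U: "openin X U" using wbO_open[OF that] .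
      have "topspace X - (topspace X - U) = U" using openin_subset[OF U] by blast
      then show ?thesis using mem[of "topspace X - U"] that U by auto
    qed
    have e1: "\<exists>U. wbO X U V"
    proof -
      obtain t where "t \<in> ?WB" using dir unfolding directed_in_def by blast
      then show ?thesis using mem by blast
    qed
    have e2: "\<exists>U3. wbO X U3 V \<and> U1 \<subseteq> U3 \<and> U2 \<subseteq> U3" if "wbO X U1 V" "wbO X U2 V" for U1 U2
    proof -
      have "topspace X - U1 \<in> ?WB" "topspace X - U2 \<in> ?WB" using memU that by auto
      then obtain z where z: "z \<in> ?WB" "z \<subseteq> topspace X - U1" "z \<subseteq> topspace X - U2"
        using dir unfolding directed_in_def by meson
      have "U1 \<subseteq> topspace X" "U2 \<subseteq> topspace X" using that wbO_open openin_subset by metis+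
      then have "U1 \<subseteq> topspace X - z" "U2 \<subseteq> topspace X - z" using z by auto
      moreover have "wbO X (topspace X - z) V" using z(1) mem by blast
      ultimately show ?thesis by blast
    qed
    have e3: "V \<subseteq> \<Union>{U. wbO X U V}"
    proof -
      let ?u = "topspace X - \<Union>{U. wbO X U V}"
      have "openin X (\<Union>{U. wbO X U V})" by (rule openin_Union) (auto dest: wbO_open)
      then have "?u \<in> ?Cl" by auto
      moreover have "\<forall>d\<in>?WB. ?u \<subseteq> d"
      proof
        fix d assume "d \<in> ?WB"
        then have "wbO X (topspace X - d) V" "d \<subseteq> topspace X" using mem closedin_subset by blast+
        then show "?u \<subseteq> d" by blast
      qed
      ultimately have "?u \<subseteq> topspace X - V" using sup unfolding is_sup_in_def by blast
      then show ?thesis using openin_subset[OF V] by blast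
    qed
    show "PQ X V" unfolding PQ_def using e1 e2 e3 by blast
  qed
next
  assume Q: "\<forall>V. openin X V \<longrightarrow> PQ X V"
  show "core_compact X" unfolding core_compact_def continuous_poset_def
  proof (intro ballI conjI)
    let ?Cl = "{C. closedin X C}" and ?le = "\<lambda>C D. D \<subseteq> (C::'a set)"
    fix C assume "C \<in> ?Cl"
    define V where "V = topspace X - C"
    have V: "openin X V" using \<open>C \<in> ?Cl\<close> V_def by auto
    have CV: "C = topspace X - V" using \<open>C \<in> ?Cl\<close> V_def closedin_subset by auto
    have P: "PQ X V" using Q V by blast
    have e1: "\<exists>U. wbO X U V" using P unfolding PQ_def by blast
    have e2: "\<And>U1 U2. wbO X U1 V \<Longrightarrow> wbO X U2 V \<Longrightarrow> \<exists>U3. wbO X U3 V \<and> U1 \<subseteq> U3 \<and> U2 \<subseteq> U3"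
      using P unfolding PQ_def by blast
    have e3: "V \<subseteq> \<Union>{U. wbO X U V}" using P unfolding PQ_def by blast
    let ?WB = "{t\<in>?Cl. way_below ?Cl ?le t (topspace X - V)}"
    have mem: "t \<in> ?WB \<longleftrightarrow> closedin X t \<and> wbO X (topspace X - t) V" for t
      using WB_char[OF V, of t] by blast
    have memU: "topspace X - U \<in> ?WB" if "wbO X U V" for U
    proof -
      have U: "openin X U" using wbO_open[OF that] .
      have "topspace X - (topspace X - U) = U" using openin_subset[OF U] by blast
      then show ?thesis using mem[of "topspace X - U"] that U by auto
    qed
    have "directed_in ?Cl ?le ?WB"
    proof (rule directed_inI)
      show "?WB \<subseteq> ?Cl" by blast
      show "?WB \<noteq> {}" using e1 memU by blast
      fix x y assume "x \<in> ?WB" "y \<in> ?WB"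
      then have x: "wbO X (topspace X - x) V" "x \<subseteq> topspace X" and y: "wbO X (topspace X - y) V" "y \<subseteq> topspace X"
        using mem closedin_subset by blast+
      obtain U3 where U3: "wbO X U3 V" "topspace X - x \<subseteq> U3" "topspace X - y \<subseteq> U3" using e2[OF x(1) y(1)] by blast
      have "topspace X - U3 \<in> ?WB" using memU U3 by blast
      moreover have "topspace X - U3 \<subseteq> x" "topspace X - U3 \<subseteq> y" using U3 x y by auto
      ultimately show "\<exists>z\<in>?WB. ?le x z \<and> ?le y z" by blast
    qed
    moreover have "is_sup_in ?Cl ?le ?WB (topspace X - V)"
    proof (rule is_sup_inI)
      show "topspace X - V \<in> ?Cl" using V by blast
      fix d assume "d \<in> ?WB"
      then have "wbO X (topspace X - d) V" "d \<subseteq> topspace X" using mem closedin_subset by blast+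
      then show "topspace X - V \<subseteq> d" using wbO_sub[OF V] by blast
    next
      fix u assume u: "u \<in> ?Cl" "\<And>d. d \<in> ?WB \<Longrightarrow> u \<subseteq> d"
      have "u \<subseteq> topspace X - U" if "wbO X U V" for U using u(2) memU that by blast
      then have "u \<inter> V = {}" using e3 by blast
      then show "u \<subseteq> topspace X - V" using u(1) closedin_subset by blast
    qed
    ultimately show "directed_in ?Cl ?le {t\<in>?Cl. way_below ?Cl ?le t C}" "is_sup_in ?Cl ?le {t\<in>?Cl. way_below ?Cl ?le t C} C"
      by (simp_all only: CV)
  qed
qed


lemma restr_dom_eq: "f |` dom f = f"
  by (rule ext) (auto simp: restrict_map_def dom_def)

lemma restr_PG:
  assumes f: "f \<in> sym_pseudogroup X" and U: "openin X U" and sub: "U \<subseteq> dom f"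
  shows "f |` U \<in> sym_pseudogroup X"
proof -
  let ?h = "\<lambda>x. the (f x)"
  have D: "openin X (dom f)" and R: "openin X (ran f)"
    and hm: "homeomorphic_map (subtopology X (dom f)) (subtopology X (ran f)) ?h"
    using f unfolding sym_pseudogroup_def by auto
  have tD: "topspace (subtopology X (dom f)) = dom f" using openin_subset[OF D] by auto
  have tR: "topspace (subtopology X (ran f)) = ran f" using openin_subset[OF R] by auto
  have img: "?h ` dom f = ran f"
    using homeomorphic_imp_surjective_map[OF hm] tD tR by simp
  have ranr: "ran (f |` U) = ?h ` U"
  proof
    show "ran (f |` U) \<subseteq> ?h ` U"
    proof
      fix y assume "y \<in> ran (f |` U)"
      then obtain x where "x \<in> U" "f x = Some y" using ran_restrictD by metis
      then show "y \<in> ?h ` U" by force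
    qed
    show "?h ` U \<subseteq> ran (f |` U)"
    proof
      fix y assume "y \<in> ?h ` U"
      then obtain x where x: "x \<in> U" "y = ?h x" by blast
      then obtain z where "f x = Some z" using sub by blast
      then have "(f |` U) x = Some y" using x by simp
      then show "y \<in> ran (f |` U)" unfolding ran_def by blast
    qed
  qed
  have domr: "dom (f |` U) = U" using sub by auto
  have "?h ` U \<subseteq> ran f" using img sub by blast
  have hm2: "homeomorphic_map (subtopology (subtopology X (dom f)) U) (subtopology (subtopology X (ran f)) (?h ` U)) ?h"
    by (rule homeomorphic_map_subtopologies[OF hm]) (use tD tR sub \<open>?h ` U \<subseteq> ran f\<close> in auto)
  have e1: "subtopology (subtopology X (dom f)) U = subtopology X U"
    by (simp add: subtopology_subtopology Int_absorb1 sub)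
  have e2: "subtopology (subtopology X (ran f)) (?h ` U) = subtopology X (?h ` U)"
    by (simp add: subtopology_subtopology Int_absorb1 \<open>?h ` U \<subseteq> ran f\<close>)
  have hm3: "homeomorphic_map (subtopology X U) (subtopology X (?h ` U)) (\<lambda>x. the ((f |` U) x))"
    apply (rule homeomorphic_map_eq[OF hm2[unfolded e1 e2]])
    by simp
  have "openin (subtopology X (dom f)) U" using U sub by (simp add: openin_subset_topspace_eq openin_subtopology_Int_subset openin_open_subtopology D)
  then have "openin (subtopology X (ran f)) (?h ` U)"
    using homeomorphic_imp_open_map[OF hm] unfolding open_map_def by blast
  then have o: "openin X (?h ` U)" using R openin_trans_full by blast
  show ?thesis unfolding sym_pseudogroup_def mem_Collect_eq
    apply (subst domr)+
    apply (subst ranr)+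
    apply (rule conjI, rule U)
    apply (rule conjI, rule o)
    apply (rule hm3)
    done
qed

lemma PG_dom_open: "f \<in> sym_pseudogroup X \<Longrightarrow> openin X (dom f)"
  unfolding sym_pseudogroup_def by simp

lemma pg_le_refl: "f \<in> sym_pseudogroup X \<Longrightarrow> pg_le X f f"
  unfolding pg_le_def using restr_dom_eq[of f] PG_dom_open[of f X] by auto

lemma pg_leD:
  assumes "pg_le X g f"
  shows "g = f |` dom g" "dom g \<subseteq> dom f" "openin X (dom g)"
proof -
  obtain U where U: "openin X U" "U \<subseteq> dom f" "g = f |` U" using assms unfolding pg_le_def by blast
  then have "dom g = U" by auto
  then show "g = f |` dom g" "dom g \<subseteq> dom f" "openin X (dom g)" using U by auto
qed

lemma pg_le_restr: "openin X U \<Longrightarrow> U \<subseteq> dom f \<Longrightarrow> pg_le X (f |` U) f"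
  unfolding pg_le_def by blast


lemma wb_PG:
  assumes f: "f \<in> sym_pseudogroup X" and g: "g \<in> sym_pseudogroup X"
  shows "way_below (sym_pseudogroup X) (pg_le X) g f \<longleftrightarrow> pg_le X g f \<and> wbO X (dom g) (dom f)"
proof
  let ?PG = "sym_pseudogroup X"
  assume wb: "way_below ?PG (pg_le X) g f"
  have dir1: "directed_in ?PG (pg_le X) {f}"
    by (rule directed_inI) (use f pg_le_refl[OF f] in auto)
  have sup1: "is_sup_in ?PG (pg_le X) {f} f"
    by (rule is_sup_inI) (use f pg_le_refl[OF f] in auto)
  from way_belowD[where le="pg_le X", OF wb dir1 sup1 pg_le_refl[OF f]] have gf: "pg_le X g f" by simp
  have Vo: "openin X (dom f)" using PG_dom_open[OF f] .
  have "wbO X (dom g) (dom f)"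
  proof (rule wbOI)
    show "openin X (dom g)" using PG_dom_open[OF g] .
    fix \<U> :: "'a set set"
    assume ne: "\<U> \<noteq> {}" and op: "\<And>W. W \<in> \<U> \<Longrightarrow> openin X W"
      and dr: "\<And>A B. A \<in> \<U> \<Longrightarrow> B \<in> \<U> \<Longrightarrow> \<exists>C\<in>\<U>. A \<subseteq> C \<and> B \<subseteq> C"
      and cov: "dom f \<subseteq> \<Union>\<U>"
    let ?D = "(\<lambda>W. f |` (W \<inter> dom f)) ` \<U>"
    have inPG: "f |` (W \<inter> dom f) \<in> ?PG" if "W \<in> \<U>" for W
      using restr_PG[OF f, of "W \<inter> dom f"] op[OF that] Vo by auto
    have dir: "directed_in ?PG (pg_le X) ?D"
    proof (rule directed_inI)
      show "?D \<subseteq> ?PG" using inPG by blast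
      show "?D \<noteq> {}" using ne by blast
      fix x y assume "x \<in> ?D" "y \<in> ?D"
      then obtain A B where AB: "A \<in> \<U>" "B \<in> \<U>" "x = f |` (A \<inter> dom f)" "y = f |` (B \<inter> dom f)" by blast
      obtain C where C: "C \<in> \<U>" "A \<subseteq> C" "B \<subseteq> C" using dr[OF AB(1,2)] by blast
      have "pg_le X x (f |` (C \<inter> dom f))"
        unfolding pg_le_def
        by (rule exI[of _ "A \<inter> dom f"]) (use AB C op Vo in \<open>auto intro!: arg_cong[where f="restrict_map f"]\<close>)
      moreover have "pg_le X y (f |` (C \<inter> dom f))"
        unfolding pg_le_def
        by (rule exI[of _ "B \<inter> dom f"]) (use AB C op Vo in \<open>auto intro!: arg_cong[where f="restrict_map f"]\<close>)
      ultimately show "\<exists>z\<in>?D. pg_le X x z \<and> pg_le X y z" using C(1) by blast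
    qed
    have sup: "is_sup_in ?PG (pg_le X) ?D f"
    proof (rule is_sup_inI)
      show "f \<in> ?PG" by (rule f)
      fix d assume "d \<in> ?D"
      then obtain W where W: "W \<in> \<U>" "d = f |` (W \<inter> dom f)" by blast
      show "pg_le X d f" unfolding W(2) by (rule pg_le_restr) (use op[OF W(1)] Vo in auto)
    next
      fix u assume u: "u \<in> ?PG" "\<And>d. d \<in> ?D \<Longrightarrow> pg_le X d u"
      have key: "x \<in> dom u \<and> u x = f x" if xf: "x \<in> dom f" for x
      proof -
        obtain W where W: "W \<in> \<U>" "x \<in> W" using cov xf by blast
        have "pg_le X (f |` (W \<inter> dom f)) u" using u(2) W(1) by blast
        then have e: "f |` (W \<inter> dom f) = u |` dom (f |` (W \<inter> dom f))" and s: "dom (f |` (W \<inter> dom f)) \<subseteq> dom u"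
          by (rule pg_leD)+
        have xin: "x \<in> dom (f |` (W \<inter> dom f))" using W xf by auto
        have "(f |` (W \<inter> dom f)) x = f x" using W xf by simp
        moreover have "(u |` dom (f |` (W \<inter> dom f))) x = u x" using xin by simp
        ultimately show ?thesis using e s xin by auto
      qed
      have "f = u |` dom f"
      proof
        fix x show "f x = (u |` dom f) x"
          by (cases "x \<in> dom f") (use key in \<open>auto simp: domIff\<close>)
      qed
      moreover have "dom f \<subseteq> dom u" using key by blast
      ultimately show "pg_le X f u" unfolding pg_le_def using Vo by blast
    qed
    from way_belowD[where le="pg_le X", OF wb dir sup pg_le_refl[OF f]] obtain d where d: "d \<in> ?D" "pg_le X g d" by blast
    then obtain W where W: "W \<in> \<U>" "d = f |` (W \<inter> dom f)" by blast
    have "dom g \<subseteq> dom d" using pg_leD(2)[OF d(2)] .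
    then show "\<exists>W\<in>\<U>. dom g \<subseteq> W" using W by auto
  qed
  then show "pg_le X g f \<and> wbO X (dom g) (dom f)" using gf by blast
next
  let ?PG = "sym_pseudogroup X"
  assume H: "pg_le X g f \<and> wbO X (dom g) (dom f)"
  then have gf: "pg_le X g f" and wb: "wbO X (dom g) (dom f)" by auto
  show "way_below ?PG (pg_le X) g f"
  proof (rule way_belowI)
    fix D s assume dir: "directed_in ?PG (pg_le X) D" and sup: "is_sup_in ?PG (pg_le X) D s"
      and fs: "pg_le X f s"
    have DPG: "D \<subseteq> ?PG" and Dne: "D \<noteq> {}" using dir unfolding directed_in_def by auto
    have sPG: "s \<in> ?PG" and ub: "\<And>d. d \<in> D \<Longrightarrow> pg_le X d s"
      and least: "\<And>u. u \<in> ?PG \<Longrightarrow> (\<forall>d\<in>D. pg_le X d u) \<Longrightarrow> pg_le X s u"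
      using sup unfolding is_sup_in_def by auto
    define W where "W = \<Union>(dom ` D)"
    have Wo: "openin X W" unfolding W_def using DPG PG_dom_open by (intro openin_Union) blast
    have Ws: "W \<subseteq> dom s" unfolding W_def using ub pg_leD(2) by blast
    have uPG: "s |` W \<in> ?PG" using restr_PG[OF sPG Wo Ws] .
    have "\<forall>d\<in>D. pg_le X d (s |` W)"
    proof
      fix d assume dD: "d \<in> D"
      have d1: "d = s |` dom d" using pg_leD(1)[OF ub[OF dD]] .
      have "dom d \<subseteq> W" unfolding W_def using dD by blast
      then have "W \<inter> dom d = dom d" by blast
      then have d2: "(s |` W) |` dom d = s |` dom d" by simp
      have "d = (s |` W) |` dom d" using trans[OF d1 sym[OF d2]] .
      moreover have "dom d \<subseteq> dom (s |` W)" unfolding dom_restrict using \<open>dom d \<subseteq> W\<close> Ws by blast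
      moreover have "openin X (dom d)" using DPG dD PG_dom_open by blast
      ultimately show "pg_le X d (s |` W)" unfolding pg_le_def by blast
    qed
    from least[OF uPG this] have "dom s \<subseteq> dom (s |` W)" by (rule pg_leD(2))
    then have sW: "dom s \<subseteq> W" by auto
    have "\<exists>V\<in>dom ` D. dom g \<subseteq> V"
    proof (rule wbOD[OF wb])
      show "dom ` D \<noteq> {}" using Dne by blast
      show "\<And>V. V \<in> dom ` D \<Longrightarrow> openin X V" using DPG PG_dom_open by blast
      show "dom f \<subseteq> \<Union>(dom ` D)" using pg_leD(2)[OF fs] sW unfolding W_def by blast
      fix A B assume "A \<in> dom ` D" "B \<in> dom ` D"
      then obtain a b where ab: "a \<in> D" "b \<in> D" "A = dom a" "B = dom b" by blast
      then obtain c where c: "c \<in> D" "pg_le X a c" "pg_le X b c" using dir unfolding directed_in_def by meson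
      show "\<exists>C\<in>dom ` D. A \<subseteq> C \<and> B \<subseteq> C"
        by (rule bexI[of _ "dom c"]) (use ab c pg_leD(2)[OF c(2)] pg_leD(2)[OF c(3)] in auto)
    qed
    then obtain d where dD: "d \<in> D" and gd: "dom g \<subseteq> dom d" by blast
    have g1: "g = f |` dom g" by (rule pg_leD(1)[OF gf])
    have gf2: "dom g \<subseteq> dom f" by (rule pg_leD(2)[OF gf])
    have f1: "f = s |` dom f" by (rule pg_leD(1)[OF fs])
    have d1: "d = s |` dom d" by (rule pg_leD(1)[OF ub[OF dD]])
    have i1: "dom d \<inter> dom g = dom g" using gd by blast
    have i2: "dom f \<inter> dom g = dom g" using gf2 by blast
    have "f |` dom g = (s |` dom f) |` dom g" using arg_cong[OF f1, of "\<lambda>h. h |` dom g"] .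
    also have "\<dots> = s |` dom g" using i2 by simp
    finally have a: "f |` dom g = s |` dom g" .
    have "d |` dom g = (s |` dom d) |` dom g" using arg_cong[OF d1, of "\<lambda>h. h |` dom g"] .
    also have "\<dots> = s |` dom g" using i1 by simp
    finally have b: "d |` dom g = s |` dom g" .
    have "g = d |` dom g" using g1 a b by simp
    then have "pg_le X g d" unfolding pg_le_def using gd PG_dom_open[OF g] by blast
    then show "\<exists>d\<in>D. pg_le X g d" using dD by blast
  qed
qed


lemma idV_PG:
  assumes V: "openin X V"
  shows "(Some |` V) \<in> sym_pseudogroup X" and "dom (Some |` V) = V"
proof -
  have d: "dom (Some |` V) = V" by auto
  have r: "ran (Some |` V) = V" unfolding ran_def by (auto simp: restrict_map_def)
  have "homeomorphic_map (subtopology X V) (subtopology X V) id" by simp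
  then have "homeomorphic_map (subtopology X V) (subtopology X V) (\<lambda>x. the ((Some |` V) x))"
    by (rule homeomorphic_map_eq) auto
  then show "(Some |` V) \<in> sym_pseudogroup X" unfolding sym_pseudogroup_def mem_Collect_eq d r
    using V by (intro conjI)
  show "dom (Some |` V) = V" by (rule d)
qed

lemma pg_cont_iff: "continuous_poset (sym_pseudogroup X) (pg_le X) \<longleftrightarrow> (\<forall>V. openin X V \<longrightarrow> PQ X V)"
proof
  let ?PG = "sym_pseudogroup X"
  assume cp: "continuous_poset ?PG (pg_le X)"
  show "\<forall>V. openin X V \<longrightarrow> PQ X V"
  proof (intro allI impI)
    fix V assume V: "openin X V"
    define f where "f = Some |` V"
    have f: "f \<in> ?PG" and df: "dom f = V" using idV_PG[OF V] unfolding f_def by auto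
    let ?WB = "{t\<in>?PG. way_below ?PG (pg_le X) t f}"
    have dir: "directed_in ?PG (pg_le X) ?WB" and sup: "is_sup_in ?PG (pg_le X) ?WB f"
      using cp f unfolding continuous_poset_def by blast+
    have mem: "t \<in> ?WB \<longleftrightarrow> t \<in> ?PG \<and> pg_le X t f \<and> wbO X (dom t) V" for t
      using wb_PG[OF f, of t] df by blast
    have memU: "f |` U \<in> ?WB" "dom (f |` U) = U" if "wbO X U V" for U
    proof -
      have U: "openin X U" "U \<subseteq> dom f" using wbO_open[OF that] wbO_sub[OF V that] df by auto
      have "f |` U \<in> ?PG" using restr_PG[OF f U] .
      moreover have "pg_le X (f |` U) f" using pg_le_restr[OF U] .
      moreover show "dom (f |` U) = U" using U by auto
      ultimately show "f |` U \<in> ?WB" using mem that by auto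
    qed
    have e1: "\<exists>U. wbO X U V"
    proof -
      obtain t where "t \<in> ?WB" using dir unfolding directed_in_def by blast
      then show ?thesis using mem by blast
    qed
    have e2: "\<exists>U3. wbO X U3 V \<and> U1 \<subseteq> U3 \<and> U2 \<subseteq> U3" if u1: "wbO X U1 V" and u2: "wbO X U2 V" for U1 U2
    proof -
      have "f |` U1 \<in> ?WB" "f |` U2 \<in> ?WB" using memU u1 u2 by auto
      then obtain z where z: "z \<in> ?WB" "pg_le X (f |` U1) z" "pg_le X (f |` U2) z"
        using dir unfolding directed_in_def by meson
      have "dom (f |` U1) \<subseteq> dom z" "dom (f |` U2) \<subseteq> dom z" using pg_leD(2)[OF z(2)] pg_leD(2)[OF z(3)] by auto
      then have "U1 \<subseteq> dom z" "U2 \<subseteq> dom z" using memU(2) u1 u2 by auto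
      moreover have "wbO X (dom z) V" using z(1) mem by blast
      ultimately show ?thesis by blast
    qed
    have e3: "V \<subseteq> \<Union>{U. wbO X U V}"
    proof -
      define W where "W = \<Union>{U. wbO X U V}"
      have Wo: "openin X W" unfolding W_def by (rule openin_Union) (auto dest: wbO_open)
      have WV: "W \<subseteq> dom f" unfolding W_def df using wbO_sub[OF V] by blast
      have uPG: "f |` W \<in> ?PG" using restr_PG[OF f Wo WV] .
      have "\<forall>d\<in>?WB. pg_le X d (f |` W)"
      proof
        fix t assume tW: "t \<in> ?WB"
        then have tf: "pg_le X t f" and tw: "wbO X (dom t) V" using mem by auto
        have t1: "t = f |` dom t" by (rule pg_leD(1)[OF tf])
        have tsub: "dom t \<subseteq> W" unfolding W_def using tw by blast
        then have i: "W \<inter> dom t = dom t" by blast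
        have "(f |` W) |` dom t = f |` dom t" using i by simp
        then have "t = (f |` W) |` dom t" using t1 by simp
        moreover have "dom t \<subseteq> dom (f |` W)" unfolding dom_restrict using tsub WV by blast
        moreover have "openin X (dom t)" by (rule pg_leD(3)[OF tf])
        ultimately show "pg_le X t (f |` W)" unfolding pg_le_def by blast
      qed
      then have "pg_le X f (f |` W)" using sup uPG unfolding is_sup_in_def by blast
      then have "dom f \<subseteq> dom (f |` W)" by (rule pg_leD(2))
      then show ?thesis using df unfolding W_def by auto
    qed
    show "PQ X V" unfolding PQ_def using e1 e2 e3 by blast
  qed
next
  let ?PG = "sym_pseudogroup X"
  assume Q: "\<forall>V. openin X V \<longrightarrow> PQ X V"
  show "continuous_poset ?PG (pg_le X)" unfolding continuous_poset_def
  proof (intro ballI conjI)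
    fix f assume f: "f \<in> ?PG"
    define V where "V = dom f"
    have V: "openin X V" unfolding V_def using PG_dom_open[OF f] .
    have P: "PQ X V" using Q V by blast
    have e1: "\<exists>U. wbO X U V" using P unfolding PQ_def by blast
    have e2: "\<And>U1 U2. wbO X U1 V \<Longrightarrow> wbO X U2 V \<Longrightarrow> \<exists>U3. wbO X U3 V \<and> U1 \<subseteq> U3 \<and> U2 \<subseteq> U3"
      using P unfolding PQ_def by blast
    have e3: "V \<subseteq> \<Union>{U. wbO X U V}" using P unfolding PQ_def by blast
    let ?WB = "{t\<in>?PG. way_below ?PG (pg_le X) t f}"
    have mem: "t \<in> ?WB \<longleftrightarrow> t \<in> ?PG \<and> pg_le X t f \<and> wbO X (dom t) V" for t
      using wb_PG[OF f, of t] V_def by blast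
    have memU: "f |` U \<in> ?WB" "dom (f |` U) = U" if "wbO X U V" for U
    proof -
      have U: "openin X U" "U \<subseteq> dom f" using wbO_open[OF that] wbO_sub[OF V that] V_def by auto
      have "f |` U \<in> ?PG" using restr_PG[OF f U] .
      moreover have "pg_le X (f |` U) f" using pg_le_restr[OF U] .
      moreover show "dom (f |` U) = U" using U by auto
      ultimately show "f |` U \<in> ?WB" using mem that by auto
    qed
    show "directed_in ?PG (pg_le X) ?WB"
    proof (rule directed_inI)
      show "?WB \<subseteq> ?PG" by blast
      show "?WB \<noteq> {}" using e1 memU by blast
      fix x y assume "x \<in> ?WB" "y \<in> ?WB"
      then have x: "pg_le X x f" "wbO X (dom x) V" and y: "pg_le X y f" "wbO X (dom y) V"
        using mem by auto
      obtain U3 where U3: "wbO X U3 V" "dom x \<subseteq> U3" "dom y \<subseteq> U3" using e2[OF x(2) y(2)] by blast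
      have z: "f |` U3 \<in> ?WB" "dom (f |` U3) = U3" using memU U3(1) by auto
      have lez: "pg_le X t (f |` U3)" if t: "pg_le X t f" "dom t \<subseteq> U3" for t
      proof -
        have t1: "t = f |` dom t" by (rule pg_leD(1)[OF t(1)])
        have i: "U3 \<inter> dom t = dom t" using t(2) by blast
        have "(f |` U3) |` dom t = f |` dom t" using i by simp
        then have "t = (f |` U3) |` dom t" using t1 by simp
        moreover have "dom t \<subseteq> dom (f |` U3)" using z(2) t(2) by simp
        moreover have "openin X (dom t)" by (rule pg_leD(3)[OF t(1)])
        ultimately show "pg_le X t (f |` U3)" unfolding pg_le_def by blast
      qed
      show "\<exists>z\<in>?WB. pg_le X x z \<and> pg_le X y z"
        using z(1) lez[OF x(1) U3(2)] lez[OF y(1) U3(3)] by blast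
    qed
    show "is_sup_in ?PG (pg_le X) ?WB f"
    proof (rule is_sup_inI)
      show "f \<in> ?PG" by (rule f)
      show "\<And>d. d \<in> ?WB \<Longrightarrow> pg_le X d f" using mem by blast
      fix u assume u: "u \<in> ?PG" "\<And>d. d \<in> ?WB \<Longrightarrow> pg_le X d u"
      have key: "x \<in> dom u \<and> u x = f x" if xf: "x \<in> V" for x
      proof -
        obtain U where U: "wbO X U V" "x \<in> U" using e3 xf by blast
        have le: "pg_le X (f |` U) u" using u(2) memU(1)[OF U(1)] by blast
        have e: "f |` U = u |` dom (f |` U)" by (rule pg_leD(1)[OF le])
        have s: "dom (f |` U) \<subseteq> dom u" by (rule pg_leD(2)[OF le])
        have dU: "dom (f |` U) = U" by (rule memU(2)[OF U(1)])
        have "(f |` U) x = f x" using U(2) by simp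
        moreover have "(u |` dom (f |` U)) x = u x" using U(2) dU by simp
        moreover have "(f |` U) x = (u |` dom (f |` U)) x" using fun_cong[OF e] .
        ultimately have "u x = f x" by simp
        moreover have "x \<in> dom u" using s dU U(2) by blast
        ultimately show ?thesis by blast
      qed
      have "f = u |` V"
      proof
        fix x show "f x = (u |` V) x"
        proof (cases "x \<in> V")
          case True then show ?thesis using key by simp
        next
          case False then have "f x = None" using V_def by auto
          then show ?thesis using False by simp
        qed
      qed
      moreover have "V \<subseteq> dom u" using key by blast
      ultimately show "pg_le X f u" unfolding pg_le_def using V by blast
    qed
  qed
qed

theorem corollary5p10:
  fixes X :: "'a topology"
  shows "core_compact X \<longleftrightarrow> continuous_poset (sym_pseudogroup X) (pg_le X)"
  using core_compact_iff[of X] pg_cont_iff[of X] by simp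

end
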